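(* Let $a<b$, let $\alpha\in(0,1]$, let $k:[a,b]\to\mathbb{R}$ be a continuous nonnegative map, differentiable at every $t>a$, with $k(t)\neq 0$ and $k'(t)\neq 0$ whenever $t>a$. Let $t\in(a,b)$ with $t>0$ and let $f,g:[a,b]\to\mathbb{R}$ be $\alpha$-differentiable at $t$. Then: (1) $D^{\alpha}(\lambda f+\mu g)(t)=\lambda D^{\alpha}(f)(t)+\mu D^{\alpha}(g)(t)$ for all $\lambda,\mu\in\mathbb{R}$; (2) $D^{\alpha}(s\mapsto s^{n})(t)=\frac{(k(t))^{1-\alpha}}{k'(t)}\,n t^{n-1}$ for all $n\in\mathbb{R}$; (3) $D^{\alpha}(c)(t)=0$ for every constant function $c$; (4) $D^{\alpha}(fg)(t)=f(t)D^{\alpha}(g)(t)+g(t)D^{\alpha}(f)(t)$; (5) if $g(t)\neq 0$, then $D^{\alpha}\left(\frac{f}{g}\right)(t)=\dfrac{g(t)D^{\alpha}(f)(t)-f(t)D^{\alpha}(g)(t)}{[g(t)]^{2}}$; (6) if $g$ is differentiable at $t$ and $f$ (defined on an interval containing the range of $g$) is differentiable at $g(t)$, then $D^{\alpha}(f\circ g)(t)=\frac{(k(t))^{1-\alpha}}{k'(t)}\,f'(g(t))\,g'(t)$.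
   Context: For $k$ as in the claim, a real function $f$ defined near $t\in(a,b)$, and $\alpha\in(0,1]$, the generalized fractional derivative of $f$ of order $\alpha$ at $t$ is $$D^{\alpha}(f)(t)=f^{(\alpha)}(t):=\lim_{\varepsilon\to 0}\frac{f\left(t-k(t)+k(t)\,e^{\varepsilon\frac{(k(t))^{-\alpha}}{k'(t)}}\right)-f(t)}{\varepsilon},$$ and $f$ is called $\alpha$-differentiable at $t$ if this limit exists. *)

theory Defs
  imports "HOL-Analysis.Analysis"
begin

text \<open>Difference quotient of the generalized fractional derivative; k' is the
  derivative of the kernel k (passed explicitly, since k lives on [a,b]).\<close>
definition gfd_quot :: "(real \<Rightarrow> real) \<Rightarrow> (real \<Rightarrow> real) \<Rightarrow> real \<Rightarrow> (real \<Rightarrow> real) \<Rightarrow> real \<Rightarrow> real \<Rightarrow> real" where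
  "gfd_quot k k' \<alpha> f t \<epsilon> =
     (f (t - k t + k t * exp (\<epsilon> * (k t) powr (- \<alpha>) / k' t)) - f t) / \<epsilon>"

definition alpha_differentiable :: "(real \<Rightarrow> real) \<Rightarrow> (real \<Rightarrow> real) \<Rightarrow> real \<Rightarrow> (real \<Rightarrow> real) \<Rightarrow> real \<Rightarrow> bool" where
  "alpha_differentiable k k' \<alpha> f t \<longleftrightarrow> (\<exists>L. (gfd_quot k k' \<alpha> f t \<longlongrightarrow> L) (at 0))"

definition gfd :: "(real \<Rightarrow> real) \<Rightarrow> (real \<Rightarrow> real) \<Rightarrow> real \<Rightarrow> (real \<Rightarrow> real) \<Rightarrow> real \<Rightarrow> real" where
  "gfd k k' \<alpha> f t = Lim (at 0) (gfd_quot k k' \<alpha> f t)"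

end

theory Submission
  imports Defs
begin

lemma quot_lim:
  fixes k k' h :: "real \<Rightarrow> real"
  assumes "(h has_real_derivative D) (at t)"
  shows "(gfd_quot k k' \<alpha> h t \<longlongrightarrow> D * (k t * ((k t) powr (- \<alpha>) / k' t))) (at 0)"
proof -
  define p where "p = (\<lambda>e::real. t - k t + k t * exp (e * (k t) powr (- \<alpha>) / k' t))"
  have p0: "p 0 = t" by (simp add: p_def)
  have dp: "(p has_real_derivative (k t * ((k t) powr (- \<alpha>) / k' t))) (at 0)"
  proof -
    have "((\<lambda>e::real. t - k t + k t * exp (e * ((k t) powr (- \<alpha>) / k' t))) has_real_derivative
       (k t * ((k t) powr (- \<alpha>) / k' t))) (at 0)"
      by (rule derivative_eq_intros refl | simp)+
    then show ?thesis unfolding p_def by (simp add: times_divide_eq_right)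
  qed
  have "((h \<circ> p) has_real_derivative D * (k t * ((k t) powr (- \<alpha>) / k' t))) (at 0)"
    using DERIV_chain[OF _ dp] assms p0 by (metis mult.commute)
  then have "((\<lambda>y. ((h \<circ> p) y - (h \<circ> p) 0) / (y - 0)) \<longlongrightarrow> D * (k t * ((k t) powr (- \<alpha>) / k' t))) (at 0)"
    using has_field_derivative_iff by blast
  moreover have "(\<lambda>y. ((h \<circ> p) y - (h \<circ> p) 0) / (y - 0)) = gfd_quot k k' \<alpha> h t"
    by (auto simp: gfd_quot_def p_def fun_eq_iff)
  ultimately show ?thesis by simp
qed

lemma gfd_eq: "(gfd_quot k k' \<alpha> h t \<longlongrightarrow> L) (at 0) \<Longrightarrow> gfd k k' \<alpha> h t = L"
  by (simp add: gfd_def tendsto_Lim)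

theorem mainTheorem3:
  fixes a b \<alpha> t :: real and k k' f g :: "real \<Rightarrow> real"
  assumes ab: "a < b"
    and alpha: "0 < \<alpha>" "\<alpha> \<le> 1"
    and k_cont: "continuous_on {a..b} k"
    and k_nonneg: "\<forall>s\<in>{a..b}. 0 \<le> k s"
    and k_deriv: "\<forall>s\<in>{a<..b}. (k has_real_derivative k' s) (at s within {a..b})"
    and k_nz: "\<forall>s\<in>{a<..b}. k s \<noteq> 0"
    and k'_nz: "\<forall>s\<in>{a<..b}. k' s \<noteq> 0"
    and t: "t \<in> {a<..<b}" "0 < t"
    and f_ad: "alpha_differentiable k k' \<alpha> f t"
    and g_ad: "alpha_differentiable k k' \<alpha> g t"
  shows "(\<forall>l m :: real. gfd k k' \<alpha> (\<lambda>s. l * f s + m * g s) t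
                 = l * gfd k k' \<alpha> f t + m * gfd k k' \<alpha> g t)
       \<and> (\<forall>n::real. gfd k k' \<alpha> (\<lambda>s. s powr n) t
                 = (k t) powr (1 - \<alpha>) / k' t * (n * t powr (n - 1)))
       \<and> (\<forall>c::real. gfd k k' \<alpha> (\<lambda>s. c) t = 0)
       \<and> gfd k k' \<alpha> (\<lambda>s. f s * g s) t = f t * gfd k k' \<alpha> g t + g t * gfd k k' \<alpha> f t
       \<and> (g t \<noteq> 0 \<longrightarrow> gfd k k' \<alpha> (\<lambda>s. f s / g s) t
                 = (g t * gfd k k' \<alpha> f t - f t * gfd k k' \<alpha> g t) / (g t)\<^sup>2)
       \<and> (g differentiable (at t) \<and> f differentiable (at (g t)) \<longrightarrow>
            gfd k k' \<alpha> (f \<circ> g) t = (k t) powr (1 - \<alpha>) / k' t * (deriv f (g t) * deriv g t))"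
proof -
  have t1: "t \<in> {a..b}" "t \<in> {a<..b}" using t by auto
  have kpos: "k t > 0"
  proof -
    have "0 \<le> k t" using k_nonneg t1(1) by blast
    moreover have "k t \<noteq> 0" using k_nz t1(2) by blast
    ultimately show ?thesis by linarith
  qed
  have fac: "k t * ((k t) powr (- \<alpha>) / k' t) = (k t) powr (1 - \<alpha>) / k' t"
    using kpos by (simp add: powr_diff powr_minus field_simps)
  obtain Lf where Lf: "(gfd_quot k k' \<alpha> f t \<longlongrightarrow> Lf) (at 0)"
    using f_ad alpha_differentiable_def by blast
  obtain Lg where Lg: "(gfd_quot k k' \<alpha> g t \<longlongrightarrow> Lg) (at 0)"
    using g_ad alpha_differentiable_def by blast
  have gf: "gfd k k' \<alpha> f t = Lf" using gfd_eq[OF Lf] .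
  have gg: "gfd k k' \<alpha> g t = Lg" using gfd_eq[OF Lg] .
  define p where "p = (\<lambda>e::real. t - k t + k t * exp (e * (k t) powr (- \<alpha>) / k' t))"
  have q: "\<And>h e. gfd_quot k k' \<alpha> h t e = (h (p e) - h t) / e"
    by (simp add: gfd_quot_def p_def)
  have ev: "\<forall>\<^sub>F e in at (0::real). e \<noteq> 0"
    by (simp add: eventually_at_filter)
  have cont: "((\<lambda>e. h (p e)) \<longlongrightarrow> h t) (at 0)"
    if "(gfd_quot k k' \<alpha> h t \<longlongrightarrow> L) (at 0)" for h L
  proof -
    have "((\<lambda>e. h t + e * gfd_quot k k' \<alpha> h t e) \<longlongrightarrow> h t + 0 * L) (at 0)"
      by (intro tendsto_intros that)
    then have "((\<lambda>e. h t + e * gfd_quot k k' \<alpha> h t e) \<longlongrightarrow> h t) (at 0)" by simp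
    then show ?thesis
      by (rule tendsto_cong[THEN iffD1, rotated])
        (use ev in \<open>eventually_elim, simp add: q\<close>)
  qed
  have P1: "\<forall>l m :: real. gfd k k' \<alpha> (\<lambda>s. l * f s + m * g s) t
                 = l * gfd k k' \<alpha> f t + m * gfd k k' \<alpha> g t"
  proof (intro allI)
    fix l m :: real
    have "((\<lambda>e. l * gfd_quot k k' \<alpha> f t e + m * gfd_quot k k' \<alpha> g t e) \<longlongrightarrow> l * Lf + m * Lg) (at 0)"
      by (intro tendsto_intros Lf Lg)
    moreover have "(\<lambda>e. l * gfd_quot k k' \<alpha> f t e + m * gfd_quot k k' \<alpha> g t e)
       = gfd_quot k k' \<alpha> (\<lambda>s. l * f s + m * g s) t"
      by (simp add: q fun_eq_iff field_simps add_divide_distrib diff_divide_distrib)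
    ultimately show "gfd k k' \<alpha> (\<lambda>s. l * f s + m * g s) t
                 = l * gfd k k' \<alpha> f t + m * gfd k k' \<alpha> g t"
      using gfd_eq gf gg by metis
  qed
  have P2: "\<forall>n::real. gfd k k' \<alpha> (\<lambda>s. s powr n) t
                 = (k t) powr (1 - \<alpha>) / k' t * (n * t powr (n - 1))"
  proof
    fix n :: real
    show "gfd k k' \<alpha> (\<lambda>s. s powr n) t = (k t) powr (1 - \<alpha>) / k' t * (n * t powr (n - 1))"
      using gfd_eq[OF quot_lim[OF has_real_derivative_powr[OF t(2), of n], of k k' \<alpha>]]
      unfolding fac by (simp only: mult.commute)
  qed
  have P3: "\<forall>c::real. gfd k k' \<alpha> (\<lambda>s. c) t = 0"
    using gfd_eq[OF quot_lim[OF DERIV_const]] by simp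
  have fc: "((\<lambda>e. f (p e)) \<longlongrightarrow> f t) (at 0)" using cont[OF Lf] .
  have gc: "((\<lambda>e. g (p e)) \<longlongrightarrow> g t) (at 0)" using cont[OF Lg] .
  have P4: "gfd k k' \<alpha> (\<lambda>s. f s * g s) t = f t * gfd k k' \<alpha> g t + g t * gfd k k' \<alpha> f t"
  proof -
    have "((\<lambda>e. f (p e) * gfd_quot k k' \<alpha> g t e + g t * gfd_quot k k' \<alpha> f t e) \<longlongrightarrow> f t * Lg + g t * Lf) (at 0)"
      by (intro tendsto_intros Lf Lg fc)
    moreover have "(\<lambda>e. f (p e) * gfd_quot k k' \<alpha> g t e + g t * gfd_quot k k' \<alpha> f t e)
       = gfd_quot k k' \<alpha> (\<lambda>s. f s * g s) t"
      by (simp add: q fun_eq_iff add_divide_distrib[symmetric] algebra_simps)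
    ultimately show ?thesis using gfd_eq gf gg by metis
  qed
  have P5: "g t \<noteq> 0 \<longrightarrow> gfd k k' \<alpha> (\<lambda>s. f s / g s) t
                 = (g t * gfd k k' \<alpha> f t - f t * gfd k k' \<alpha> g t) / (g t)\<^sup>2"
  proof
    assume g0: "g t \<noteq> 0"
    have evg: "\<forall>\<^sub>F e in at 0. g (p e) \<noteq> 0"
      using tendsto_imp_eventually_ne[OF gc g0] .
    have "((\<lambda>e. (g t * gfd_quot k k' \<alpha> f t e - f t * gfd_quot k k' \<alpha> g t e) / (g (p e) * g t))
       \<longlongrightarrow> (g t * Lf - f t * Lg) / (g t * g t)) (at 0)"
      by (intro tendsto_intros Lf Lg gc) (simp add: g0)
    then have "(gfd_quot k k' \<alpha> (\<lambda>s. f s / g s) t \<longlongrightarrow> (g t * Lf - f t * Lg) / (g t * g t)) (at 0)"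
      by (rule tendsto_cong[THEN iffD1, rotated])
        (use ev evg in \<open>eventually_elim, simp add: q g0 field_simps\<close>)
    then show "gfd k k' \<alpha> (\<lambda>s. f s / g s) t
                 = (g t * gfd k k' \<alpha> f t - f t * gfd k k' \<alpha> g t) / (g t)\<^sup>2"
      using gfd_eq gf gg by (metis power2_eq_square)
  qed
  have P6: "g differentiable (at t) \<and> f differentiable (at (g t)) \<longrightarrow>
            gfd k k' \<alpha> (f \<circ> g) t = (k t) powr (1 - \<alpha>) / k' t * (deriv f (g t) * deriv g t)"
  proof
    assume H: "g differentiable (at t) \<and> f differentiable (at (g t))"
    have "((f \<circ> g) has_real_derivative deriv f (g t) * deriv g t) (at t)"
      using H by (intro DERIV_chain) (auto simp: DERIV_deriv_iff_real_differentiable)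
    from gfd_eq[OF quot_lim[OF this, of k k' \<alpha>]]
    show "gfd k k' \<alpha> (f \<circ> g) t = (k t) powr (1 - \<alpha>) / k' t * (deriv f (g t) * deriv g t)"
      unfolding fac by (simp only: mult.commute)
  qed
  show ?thesis using P1 P2 P3 P4 P5 P6 by blast
qed

end
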